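(* Let $\mathcal A\in\mathbb C^{n_1\times n_2\times n_3}$. Then $$\mathcal A\{-,*\}\,(\mathcal A^\dagger)^*\,\mathcal A\{-,*\}\subseteq\mathcal A\{-,*\},$$ i.e. for all $\mathcal U,\mathcal V\in\mathcal A\{-,*\}$ one has $\mathcal U(\mathcal A^\dagger)^*\mathcal V\in\mathcal A\{-,*\}$.
   Context: Fix a nonsingular matrix $M\in\mathbb C^{n_3\times n_3}$. For $\mathcal C\in\mathbb C^{n_1\times n_2\times n_3}$ let $\widehat{\mathcal C}=\mathcal C\times_3M$, i.e. $\widehat{\mathcal C}_{ijk}=\sum_{l=1}^{n_3}M_{kl}\mathcal C_{ijl}$, and let $\widehat{\mathcal C}^{(i)}$ denote its $i$-th frontal slice. The M-product $\mathcal C\star_M\mathcal D$ of $\mathcal C\in\mathbb C^{n_1\times n_2\times n_3}$ and $\mathcal D\in\mathbb C^{n_2\times l\times n_3}$ is the unique tensor with $\widehat{\mathcal C\star_M\mathcal D}^{(i)}=\widehat{\mathcal C}^{(i)}\widehat{\mathcal D}^{(i)}$ for all $i\in[n_3]$. Juxtaposition of tensors denotes the M-product. The conjugate transpose $\mathcal A^*$ is defined by $\widehat{\mathcal A^*}^{(i)}=(\widehat{\mathcal A}^{(i)})^*$. The Moore–Penrose inverse $\mathcal A^\dagger$ is the unique $\mathcal W$ satisfying $\mathcal A\mathcal W\mathcal A=\mathcal A$, $\mathcal W\mathcal A\mathcal W=\mathcal W$, $(\mathcal A\mathcal W)^*=\mathcal A\mathcal W$, $(\mathcal W\mathcal A)^*=\mathcal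 W\mathcal A$. $\mathcal A\{1\}$ is the set of all $\mathcal W$ with $\mathcal A\mathcal W\mathcal A=\mathcal A$. The set of 1-Star inverses is $\mathcal A\{-,*\}=\{\mathcal A^-\mathcal A\mathcal A^*:\mathcal A^-\in\mathcal A\{1\}\}$. *)

theory Defs
  imports "HOL-Analysis.Analysis"
begin

text \<open>A third-order tensor in C^(n1 x n2 x n3) is represented as the family of its
  frontal slices: T $ k $ i $ j is the entry (i,j,k).  Dimensions are finite types.\<close>
type_synonym ('n1, 'n2, 'n3) tensor = "complex ^ 'n2 ^ 'n1 ^ 'n3"

definition mode3 :: "complex ^ 'n3::finite ^ 'n3 \<Rightarrow> ('n1::finite, 'n2::finite, 'n3) tensor \<Rightarrow> ('n1, 'n2, 'n3) tensor" where
  "mode3 M C = (\<chi> k i j. \<Sum>l\<in>UNIV. M $ k $ l * C $ l $ i $ j)"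

definition cmat_adj :: "complex ^ 'n::finite ^ 'm::finite \<Rightarrow> complex ^ 'm ^ 'n" where
  "cmat_adj X = (\<chi> i j. cnj (X $ j $ i))"

definition mprod :: "complex ^ 'n3::finite ^ 'n3 \<Rightarrow> ('n1::finite, 'n2::finite, 'n3) tensor \<Rightarrow> ('n2, 'l::finite, 'n3) tensor
    \<Rightarrow> ('n1, 'l, 'n3) tensor" where
  "mprod M C D = mode3 (matrix_inv M) (\<chi> k. (mode3 M C $ k) ** (mode3 M D $ k))"

definition tadj :: "complex ^ 'n3::finite ^ 'n3 \<Rightarrow> ('n1::finite, 'n2::finite, 'n3) tensor \<Rightarrow> ('n2, 'n1, 'n3) tensor" where
  "tadj M A = mode3 (matrix_inv M) (\<chi> k. cmat_adj (mode3 M A $ k))"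

definition is_mp_inverse :: "complex ^ 'n3::finite ^ 'n3 \<Rightarrow> ('n1::finite, 'n2::finite, 'n3) tensor \<Rightarrow> ('n2, 'n1, 'n3) tensor \<Rightarrow> bool" where
  "is_mp_inverse M A W \<longleftrightarrow>
     mprod M (mprod M A W) A = A \<and>
     mprod M (mprod M W A) W = W \<and>
     tadj M (mprod M A W) = mprod M A W \<and>
     tadj M (mprod M W A) = mprod M W A"

definition mp_inverse :: "complex ^ 'n3::finite ^ 'n3 \<Rightarrow> ('n1::finite, 'n2::finite, 'n3) tensor \<Rightarrow> ('n2, 'n1, 'n3) tensor" where
  "mp_inverse M A = (THE W. is_mp_inverse M A W)"

definition inv1 :: "complex ^ 'n3::finite ^ 'n3 \<Rightarrow> ('n1::finite, 'n2::finite, 'n3) tensor \<Rightarrow> ('n2, 'n1, 'n3) tensor set" where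
  "inv1 M A = {W. mprod M (mprod M A W) A = A}"

definition one_star_inverses :: "complex ^ 'n3::finite ^ 'n3 \<Rightarrow> ('n1::finite, 'n2::finite, 'n3) tensor \<Rightarrow> ('n2, 'n1, 'n3) tensor set" where
  "one_star_inverses M A = {mprod M (mprod M G A) (tadj M A) | G. G \<in> inv1 M A}"

end

theory Submission
  imports Defs
begin

lemma minv: assumes "invertible (M::'a::semiring_1^'n^'m)"
  shows "M ** matrix_inv M = mat 1" "matrix_inv M ** M = mat 1"
proof -
  have "\<exists>A'. M ** A' = mat 1 \<and> A' ** M = mat 1" using assms by (simp add: invertible_def)
  from someI_ex[OF this] show "M ** matrix_inv M = mat 1" "matrix_inv M ** M = mat 1"
    by (simp_all add: matrix_inv_def)
qed

lemma mode3_comp: "mode3 P (mode3 Q C) = mode3 (P ** Q) C"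
proof -
  have "(\<Sum>l\<in>UNIV. P $ k $ l * (\<Sum>m\<in>UNIV. Q $ l $ m * C $ m $ i $ j)) =
        (\<Sum>m\<in>UNIV. (\<Sum>l\<in>UNIV. P $ k $ l * Q $ l $ m) * C $ m $ i $ j)" for k i j
    by (simp add: sum_distrib_left sum_distrib_right mult.assoc) (rule sum.swap)
  then show ?thesis unfolding mode3_def matrix_matrix_mult_def by (simp add: vec_eq_iff)
qed

lemma mode3_id: "mode3 (mat 1) C = C"
proof -
  have "(\<Sum>l\<in>UNIV. mat 1 $ k $ l * C $ l $ i $ j) = C $ k $ i $ j" for k i j
    by (simp add: mat_def if_distrib[where f="\<lambda>x. x * _"] cong del: if_weak_cong)
  then show ?thesis unfolding mode3_def by (simp add: vec_eq_iff)
qed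

lemma hat_unhat: "invertible M \<Longrightarrow> mode3 M (mode3 (matrix_inv M) C) = C"
  by (simp add: mode3_comp minv mode3_id)

lemma unhat_hat: "invertible M \<Longrightarrow> mode3 (matrix_inv M) (mode3 M C) = C"
  by (simp add: mode3_comp minv mode3_id)

lemma hat_mprod: "invertible M \<Longrightarrow> mode3 M (mprod M C D) $ k = mode3 M C $ k ** mode3 M D $ k"
  by (simp add: mprod_def hat_unhat)

lemma hat_tadj: "invertible M \<Longrightarrow> mode3 M (tadj M C) $ k = cmat_adj (mode3 M C $ k)"
  by (simp add: tadj_def hat_unhat)

lemma hat_eq: "invertible M \<Longrightarrow> (C = D) \<longleftrightarrow> (\<forall>k. mode3 M C $ k = mode3 M D $ k)"
  by (metis unhat_hat vec_eq_iff)

type_synonym ('m,'n) cm = "complex ^ 'n ^ 'm"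

lemma cadj_cadj[simp]: "cmat_adj (cmat_adj X) = X"
  by (simp add: cmat_adj_def vec_eq_iff)

lemma cadj_mult: "cmat_adj (X ** Y) = cmat_adj Y ** cmat_adj X"
  by (simp add: cmat_adj_def vec_eq_iff matrix_matrix_mult_def mult.commute)

lemma mat_sub_ldistrib: "(A::'a::ring_1^'n^'m) ** (X - Y) = A ** X - A ** Y"
  by (simp add: vec_eq_iff matrix_matrix_mult_def right_diff_distrib sum_subtractf)

lemma mat_rzero: "(A::'a::ring_1^'n^'m) ** (0::'a^'k^'n) = 0"
  by (simp add: vec_eq_iff matrix_matrix_mult_def)

lemma cadj_zero:
  fixes E :: "complex^'n^'m"
  assumes "cmat_adj E ** E = 0" shows "E = 0"
proof -
  have "E $ i $ j = 0" for i j
  proof -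
    have "(\<Sum>l\<in>UNIV. cnj (E $ l $ j) * E $ l $ j) = 0"
      using assms by (simp add: vec_eq_iff matrix_matrix_mult_def cmat_adj_def)
    moreover have "(\<Sum>l\<in>UNIV. cnj (E $ l $ j) * E $ l $ j) = of_real (\<Sum>l\<in>UNIV. (norm (E $ l $ j))^2)"
      unfolding of_real_sum by (rule sum.cong[OF refl]) (simp only: complex_norm_square mult.commute)
    ultimately have "(\<Sum>l\<in>UNIV. (norm (E $ l $ j))^2) = 0" by (metis of_real_eq_0_iff)
    then have "\<forall>l\<in>UNIV. (norm (E $ l $ j))^2 = 0"
      by (subst (asm) sum_nonneg_eq_0_iff) auto
    then show ?thesis by simp
  qed
  then show ?thesis by (simp add: vec_eq_iff)
qed

lemma canc:
  fixes A :: "complex^'n^'m" and X Y :: "complex^'k^'n"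
  assumes "cmat_adj A ** A ** X = cmat_adj A ** A ** Y"
  shows "A ** X = A ** Y"
proof -
  let ?E = "A ** (X - Y)"
  have "cmat_adj A ** ?E = 0"
    using assms by (simp add: mat_sub_ldistrib matrix_mul_assoc)
  then have "cmat_adj ?E ** ?E = 0"
    by (simp add: cadj_mult matrix_mul_assoc[symmetric] mat_rzero)
  then have "?E = 0" by (rule cadj_zero)
  then show ?thesis by (simp add: mat_sub_ldistrib)
qed

lemma ex_inv1: "\<exists>G. (A::complex^'n^'m) ** G ** A = A"
proof -
  obtain g where g: "Vector_Spaces.linear (*s) (*s) g" "\<forall>v\<in>range ((*v) A). A *v g v = v"
    using vec.linear_exists_right_inverse_on[OF matrix_vector_mul_linear_gen vec.subspace_UNIV, of A]
    by auto
  have "A ** matrix g ** A = A"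
    unfolding matrix_eq
    by (simp add: matrix_vector_mul_assoc[symmetric] matrix_works[OF g(1)] g(2))
  then show ?thesis by blast
qed

lemma ex13: "\<exists>Y. (A::complex^'n^'m) ** Y ** A = A \<and> cmat_adj (A ** Y) = A ** Y"
proof -
  define C where "C = cmat_adj A ** A"
  have hC: "cmat_adj C = C" by (simp add: cadj_mult C_def)
  obtain P0 where P0: "C ** P0 ** C = C" using ex_inv1 by blast
  have P0': "C ** cmat_adj P0 ** C = C"
    using arg_cong[OF P0, of cmat_adj] by (simp add: cadj_mult matrix_mul_assoc hC)
  define P where "P = P0 ** C ** cmat_adj P0"
  have hP: "cmat_adj P = P" by (simp add: P_def cadj_mult matrix_mul_assoc hC)
  have "C ** P ** C = (C ** P0 ** C) ** cmat_adj P0 ** C"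
    by (simp add: P_def matrix_mul_assoc)
  then have PC: "C ** P ** C = C" by (simp add: P0 P0')
  have "cmat_adj A ** A ** (P ** cmat_adj A ** A) = cmat_adj A ** A ** mat 1"
    using PC by (simp add: matrix_mul_assoc C_def)
  then have 1: "A ** (P ** cmat_adj A) ** A = A"
    using canc by (metis matrix_mul_assoc matrix_mul_rid)
  have 2: "cmat_adj (A ** (P ** cmat_adj A)) = A ** (P ** cmat_adj A)"
    by (simp add: cadj_mult hP matrix_mul_assoc)
  show ?thesis using 1 2 by blast
qed

lemma ex_mp: "\<exists>W. (A::complex^'n^'m) ** W ** A = A \<and> W ** A ** W = W \<and>
   cmat_adj (A ** W) = A ** W \<and> cmat_adj (W ** A) = W ** A"
proof -
  obtain Y where Y: "A ** Y ** A = A" "cmat_adj (A ** Y) = A ** Y" using ex13 by blast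
  obtain Y' where Y': "cmat_adj A ** Y' ** cmat_adj A = cmat_adj A"
     "cmat_adj (cmat_adj A ** Y') = cmat_adj A ** Y'" using ex13 by blast
  define Z where "Z = cmat_adj Y'"
  have Z1: "A ** Z ** A = A"
    using arg_cong[OF Y'(1), of cmat_adj] by (simp add: Z_def cadj_mult matrix_mul_assoc)
  have Z2: "cmat_adj (Z ** A) = Z ** A"
    using arg_cong[OF Y'(2), of cmat_adj] by (simp add: Z_def cadj_mult)
  define W where "W = Z ** A ** Y"
  have "A ** W ** A = A" by (simp add: W_def matrix_mul_assoc Z1 Y(1))
  moreover have "W ** A ** W = W"
  proof -
    have "W ** A ** W = Z ** (A ** Y ** A) ** Z ** A ** Y" by (simp add: W_def matrix_mul_assoc)
    also have "\<dots> = Z ** (A ** Z ** A) ** Y" by (simp add: Y(1) matrix_mul_assoc)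
    finally show ?thesis by (simp add: Z1 W_def)
  qed
  moreover have "A ** W = A ** Y" by (simp add: W_def matrix_mul_assoc Z1)
  moreover have "W ** A = Z ** A"
  proof -
    have "W ** A = Z ** (A ** Y ** A)" by (simp add: W_def matrix_mul_assoc)
    then show ?thesis by (simp add: Y(1))
  qed
  ultimately show ?thesis using Y(2) Z2 by metis
qed

lemma mp_unique:
  fixes A :: "complex^'n^'m"
  assumes "A ** W1 ** A = A" "W1 ** A ** W1 = W1" "cmat_adj (A ** W1) = A ** W1" "cmat_adj (W1 ** A) = W1 ** A"
  and "A ** W2 ** A = A" "W2 ** A ** W2 = W2" "cmat_adj (A ** W2) = A ** W2" "cmat_adj (W2 ** A) = W2 ** A"
  shows "W1 = W2"
proof -
  have a: "cmat_adj A = cmat_adj A ** cmat_adj W2 ** cmat_adj A"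
    using arg_cong[OF assms(5), of cmat_adj] by (simp add: cadj_mult matrix_mul_assoc)
  have "W1 = W1 ** (A ** W1)" using assms(2) by (simp add: matrix_mul_assoc)
  also have "\<dots> = W1 ** cmat_adj W1 ** cmat_adj A"
    by (metis assms(3) cadj_mult matrix_mul_assoc)
  also have "\<dots> = W1 ** cmat_adj W1 ** (cmat_adj A ** cmat_adj W2 ** cmat_adj A)"
    using a by simp
  also have "\<dots> = W1 ** cmat_adj (A ** W1) ** cmat_adj (A ** W2)"
    by (simp add: cadj_mult matrix_mul_assoc)
  also have "\<dots> = W1 ** A ** W2"
    by (simp add: assms(3,7) matrix_mul_assoc assms(2))
  finally have 1: "W1 = W1 ** A ** W2" .
  have b: "cmat_adj A = cmat_adj A ** cmat_adj W1 ** cmat_adj A"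
    using arg_cong[OF assms(1), of cmat_adj] by (simp add: cadj_mult matrix_mul_assoc)
  have "W2 = (W2 ** A) ** W2" using assms(6) by (simp add: matrix_mul_assoc)
  also have "\<dots> = cmat_adj A ** cmat_adj W2 ** W2"
    by (metis assms(8) cadj_mult)
  also have "\<dots> = (cmat_adj A ** cmat_adj W1 ** cmat_adj A) ** cmat_adj W2 ** W2"
    using b by simp
  also have "\<dots> = cmat_adj (W1 ** A) ** cmat_adj (W2 ** A) ** W2"
    by (simp add: cadj_mult matrix_mul_assoc)
  also have "\<dots> = W1 ** A ** W2 ** A ** W2"
    by (simp add: assms(4,8) matrix_mul_assoc)
  also have "\<dots> = W1 ** A ** (W2 ** A ** W2)"
    by (simp add: matrix_mul_assoc)
  also have "\<dots> = W1 ** A ** W2" by (simp only: assms(6))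
  finally show ?thesis using 1 by simp
qed

definition mpP :: "complex^'n^'m \<Rightarrow> complex^'m^'n \<Rightarrow> bool" where
  "mpP a w \<longleftrightarrow> a ** w ** a = a \<and> w ** a ** w = w \<and> cmat_adj (a ** w) = a ** w \<and> cmat_adj (w ** a) = w ** a"

lemma is_mp_iff: "invertible M \<Longrightarrow> is_mp_inverse M A W \<longleftrightarrow> (\<forall>k. mpP (mode3 M A $ k) (mode3 M W $ k))"
  unfolding is_mp_inverse_def mpP_def
  by (simp add: hat_eq[of M] hat_mprod hat_tadj) blast

lemma mp_inverse_ok:
  assumes M: "invertible M"
  shows "mpP (mode3 M A $ k) (mode3 M (mp_inverse M A) $ k)"
proof -
  define W where "W = mode3 (matrix_inv M) (\<chi> k. SOME w. mpP (mode3 M A $ k) w)"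
  have "mpP (mode3 M A $ k) (mode3 M W $ k)" for k
    unfolding W_def hat_unhat[OF M] using ex_mp unfolding mpP_def[symmetric]
    by (simp add: someI_ex[OF ex_mp[unfolded mpP_def[symmetric]]])
  then have W: "is_mp_inverse M A W" by (simp add: is_mp_iff[OF M])
  have "\<exists>!W. is_mp_inverse M A W"
  proof (rule ex1I[where P="is_mp_inverse M A", OF W])
    fix W' assume "is_mp_inverse M A W'"
    then have "\<forall>k. mpP (mode3 M A $ k) (mode3 M W' $ k)" by (simp add: is_mp_iff[OF M])
    with \<open>\<And>k. mpP (mode3 M A $ k) (mode3 M W $ k)\<close> show "W' = W"
      unfolding hat_eq[OF M] mpP_def by (metis mp_unique)
  qed
  then have "is_mp_inverse M A (mp_inverse M A)"
    unfolding mp_inverse_def by (rule theI')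
  then show ?thesis by (simp add: is_mp_iff[OF M])
qed

theorem theorem3p15:
  fixes M :: "complex ^ 'n3::finite ^ 'n3"
    and A :: "('n1::finite, 'n2::finite, 'n3) tensor"
    and U V :: "('n2, 'n1, 'n3) tensor"
  assumes "invertible M"
    and "U \<in> one_star_inverses M A"
    and "V \<in> one_star_inverses M A"
  shows "mprod M (mprod M U (tadj M (mp_inverse M A))) V \<in> one_star_inverses M A"
proof -
  note M = assms(1)
  obtain G where G: "mprod M (mprod M A G) A = A" and U: "U = mprod M (mprod M G A) (tadj M A)"
    using assms(2) unfolding one_star_inverses_def inv1_def by blast
  obtain H where H: "mprod M (mprod M A H) A = A" and V: "V = mprod M (mprod M H A) (tadj M A)"
    using assms(3) unfolding one_star_inverses_def inv1_def by blast
  define X where "X = mprod M (mprod M G A) H"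
  let ?a = "\<lambda>k. mode3 M A $ k"
  let ?g = "\<lambda>k. mode3 M G $ k"
  let ?h = "\<lambda>k. mode3 M H $ k"
  let ?w = "\<lambda>k. mode3 M (mp_inverse M A) $ k"
  have g: "?a k ** ?g k ** ?a k = ?a k" for k
    using G unfolding hat_eq[OF M] by (simp add: hat_mprod[OF M])
  have h: "?a k ** ?h k ** ?a k = ?a k" for k
    using H unfolding hat_eq[OF M] by (simp add: hat_mprod[OF M])
  have X1: "X \<in> inv1 M A"
    unfolding inv1_def X_def hat_eq[OF M]
  proof (simp add: hat_mprod[OF M], intro allI)
    fix k
    have "?a k ** (?g k ** ?a k ** ?h k) ** ?a k = (?a k ** ?g k ** ?a k) ** ?h k ** ?a k"
      by (simp add: matrix_mul_assoc)
    then show "?a k ** (?g k ** ?a k ** ?h k) ** ?a k = ?a k" by (simp add: g h)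
  qed
  have X2: "mprod M (mprod M U (tadj M (mp_inverse M A))) V = mprod M (mprod M X A) (tadj M A)"
    unfolding U V X_def hat_eq[OF M]
  proof (simp add: hat_mprod[OF M] hat_tadj[OF M], intro allI)
    fix k
    have w: "mpP (?a k) (?w k)" by (rule mp_inverse_ok[OF M])
    have k2: "?a k ** cmat_adj (?a k) ** cmat_adj (?w k) = ?a k"
    proof -
      have "?a k ** cmat_adj (?a k) ** cmat_adj (?w k) = ?a k ** cmat_adj (?w k ** ?a k)"
        by (simp add: cadj_mult matrix_mul_assoc)
      also have "\<dots> = ?a k ** ?w k ** ?a k" using w by (simp add: mpP_def matrix_mul_assoc)
      also have "\<dots> = ?a k" using w by (simp add: mpP_def)
      finally show ?thesis .
    qed
    have "?g k ** ?a k ** cmat_adj (?a k) ** cmat_adj (?w k) ** (?h k ** ?a k ** cmat_adj (?a k))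
       = ?g k ** (?a k ** cmat_adj (?a k) ** cmat_adj (?w k)) ** (?h k ** ?a k ** cmat_adj (?a k))"
      by (simp add: matrix_mul_assoc)
    also have "\<dots> = ?g k ** ?a k ** ?h k ** ?a k ** cmat_adj (?a k)"
      by (simp only: k2) (simp add: matrix_mul_assoc)
    finally show "?g k ** ?a k ** cmat_adj (?a k) ** cmat_adj (?w k) ** (?h k ** ?a k ** cmat_adj (?a k))
       = ?g k ** ?a k ** ?h k ** ?a k ** cmat_adj (?a k)" .
  qed
  show ?thesis unfolding one_star_inverses_def using X1 X2 by blast
qed

end
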